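(* In the algebra $\mathcal O_q$ defined in the context, the element $\tilde{\mathcal G}_1+qB_\delta$ is central, where $B_\delta=q^{-2}\mathcal W_1\mathcal W_0-\mathcal W_0\mathcal W_1$.
   Context: All algebras are associative and unital over a field $\mathbb F$; $q\in\mathbb F$ is nonzero and not a root of unity. For elements $X,Y$ of an algebra, $[X,Y]=XY-YX$ and $[X,Y]_q=qXY-q^{-1}YX$. Let $\rho=-(q^2-q^{-2})^2$. The algebra $\mathcal O_q$ is defined by generators $\mathcal W_{-k},\mathcal W_{k+1},\mathcal G_{k+1},\tilde{\mathcal G}_{k+1}$ ($k\in\mathbb N$) and the following relations for all $k,\ell\in\mathbb N$: $[\mathcal W_0,\mathcal W_{k+1}]=[\mathcal W_{-k},\mathcal W_1]=(\tilde{\mathcal G}_{k+1}-\mathcal G_{k+1})/(q+q^{-1})$; $[\mathcal W_0,\mathcal G_{k+1}]_q=[\tilde{\mathcal G}_{k+1},\mathcal W_0]_q=\rho\mathcal W_{-k-1}-\rho\mathcal W_{k+1}$; $[\mathcal G_{k+1},\mathcal W_1]_q=[\mathcal W_1,\tilde{\mathcal G}_{k+1}]_q=\rho\mathcal W_{k+2}-\rho\mathcal W_{-k}$; $[\mathcal W_{-k},\mathcal W_{-\ell}]=0$, $[\mathcal W_{k+1},\mathcal W_{\ell+1}]=0$; $[\mathcal W_{-k},\mathcal W_{\ell+1}]+[\mathcal W_{k+1},\mathcal W_{-\ell}]=0$; $[\mathcal W_{-k},\mathcal G_{\ell+1}]+[\mathcal G_{k+1},\mathcal W_{-\ell}]=0$;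 $[\mathcal W_{-k},\tilde{\mathcal G}_{\ell+1}]+[\tilde{\mathcal G}_{k+1},\mathcal W_{-\ell}]=0$; $[\mathcal W_{k+1},\mathcal G_{\ell+1}]+[\mathcal G_{k+1},\mathcal W_{\ell+1}]=0$; $[\mathcal W_{k+1},\tilde{\mathcal G}_{\ell+1}]+[\tilde{\mathcal G}_{k+1},\mathcal W_{\ell+1}]=0$; $[\mathcal G_{k+1},\mathcal G_{\ell+1}]=0$, $[\tilde{\mathcal G}_{k+1},\tilde{\mathcal G}_{\ell+1}]=0$; $[\tilde{\mathcal G}_{k+1},\mathcal G_{\ell+1}]+[\mathcal G_{k+1},\tilde{\mathcal G}_{\ell+1}]=0$. *)

theory Defs
  imports Main
begin

text \<open>An F-algebra A is modelled as a ring A (type class ring_1) together with a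
  unital ring homomorphism phi from the field F into the centre of A (scalars act via phi).
  The algebra O_q is presented by generators and relations; a statement about O_q is
  rendered via its universal property: for every F-algebra A and every family of elements
  of A satisfying the defining relations, the claimed property holds in the subalgebra of
  A generated by these elements.  Indexing: Wm k = W_{-k}, Wp k = W_{k+1},
  G k = G_{k+1}, Gt k = tilde G_{k+1}.\<close>

definition central_field_hom :: "('f::field \<Rightarrow> 'a::ring_1) \<Rightarrow> bool" where
  "central_field_hom phi \<longleftrightarrow>
     (\<forall>a b. phi (a + b) = phi a + phi b) \<and> (\<forall>a b. phi (a * b) = phi a * phi b) \<and>
     phi 1 = 1 \<and> (\<forall>c x. phi c * x = x * phi c)"

definition comm :: "'a::ring_1 \<Rightarrow> 'a \<Rightarrow> 'a" where
  "comm x y = x * y - y * x"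

definition qcomm :: "('f::field \<Rightarrow> 'a::ring_1) \<Rightarrow> 'f \<Rightarrow> 'a \<Rightarrow> 'a \<Rightarrow> 'a" where
  "qcomm phi q x y = phi q * x * y - phi (inverse q) * y * x"

definition rho :: "'f::field \<Rightarrow> 'f" where
  "rho q = - ((q ^ 2 - (inverse q) ^ 2) ^ 2)"

definition Oq_relations ::
  "('f::field \<Rightarrow> 'a::ring_1) \<Rightarrow> 'f \<Rightarrow> (nat \<Rightarrow> 'a) \<Rightarrow> (nat \<Rightarrow> 'a) \<Rightarrow> (nat \<Rightarrow> 'a) \<Rightarrow> (nat \<Rightarrow> 'a) \<Rightarrow> bool"
where
  "Oq_relations phi q Wm Wp G Gt \<longleftrightarrow>
    (\<forall>k. comm (Wm 0) (Wp k) = phi (inverse (q + inverse q)) * (Gt k - G k)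
        \<and> comm (Wm k) (Wp 0) = phi (inverse (q + inverse q)) * (Gt k - G k)) \<and>
    (\<forall>k. qcomm phi q (Wm 0) (G k) = phi (rho q) * Wm (Suc k) - phi (rho q) * Wp k
        \<and> qcomm phi q (Gt k) (Wm 0) = phi (rho q) * Wm (Suc k) - phi (rho q) * Wp k) \<and>
    (\<forall>k. qcomm phi q (G k) (Wp 0) = phi (rho q) * Wp (Suc k) - phi (rho q) * Wm k
        \<and> qcomm phi q (Wp 0) (Gt k) = phi (rho q) * Wp (Suc k) - phi (rho q) * Wm k) \<and>
    (\<forall>k l. comm (Wm k) (Wm l) = 0 \<and> comm (Wp k) (Wp l) = 0) \<and>
    (\<forall>k l. comm (Wm k) (Wp l) + comm (Wp k) (Wm l) = 0) \<and>
    (\<forall>k l. comm (Wm k) (G l) + comm (G k) (Wm l) = 0) \<and>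
    (\<forall>k l. comm (Wm k) (Gt l) + comm (Gt k) (Wm l) = 0) \<and>
    (\<forall>k l. comm (Wp k) (G l) + comm (G k) (Wp l) = 0) \<and>
    (\<forall>k l. comm (Wp k) (Gt l) + comm (Gt k) (Wp l) = 0) \<and>
    (\<forall>k l. comm (G k) (G l) = 0 \<and> comm (Gt k) (Gt l) = 0) \<and>
    (\<forall>k l. comm (Gt k) (G l) + comm (G k) (Gt l) = 0)"

inductive_set gen_subalg ::
  "('f::field \<Rightarrow> 'a::ring_1) \<Rightarrow> (nat \<Rightarrow> 'a) \<Rightarrow> (nat \<Rightarrow> 'a) \<Rightarrow> (nat \<Rightarrow> 'a) \<Rightarrow> (nat \<Rightarrow> 'a) \<Rightarrow> 'a set"
  for phi Wm Wp G Gt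
where
  scal: "phi c \<in> gen_subalg phi Wm Wp G Gt"
| gWm: "Wm k \<in> gen_subalg phi Wm Wp G Gt"
| gWp: "Wp k \<in> gen_subalg phi Wm Wp G Gt"
| gG: "G k \<in> gen_subalg phi Wm Wp G Gt"
| gGt: "Gt k \<in> gen_subalg phi Wm Wp G Gt"
| add: "x \<in> gen_subalg phi Wm Wp G Gt \<Longrightarrow> y \<in> gen_subalg phi Wm Wp G Gt \<Longrightarrow> x + y \<in> gen_subalg phi Wm Wp G Gt"
| mult: "x \<in> gen_subalg phi Wm Wp G Gt \<Longrightarrow> y \<in> gen_subalg phi Wm Wp G Gt \<Longrightarrow> x * y \<in> gen_subalg phi Wm Wp G Gt"

end

theory Submission
  imports Defs
begin

lemma cr: "(\<And>x. s * x = x * s) \<Longrightarrow> v * s = s * v \<and> v * (s * y) = s * (v * (y::'a::ring_1))"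
  by (metis mult.assoc)

lemma sw: "(\<And>x. s * x = x * s) \<Longrightarrow> s * (t * y) = t * (s * (y::'a::ring_1)) \<and> s * t = t * s"
  by (metis mult.assoc)

lemma LW0:
  fixes a b c X W0 W1 Gt0 Gk Gtk :: "'a::ring_1"
  assumes ca: "\<And>x. a * x = x * a" and cb: "\<And>x. b * x = x * b" and cc: "\<And>x. c * x = x * c"
  and abc: "a * c + b * c = 1"
  and h0: "X * W0 - W0 * X = 0"
  and h1: "X * W1 - W1 * X = c * (Gtk - Gk)"
  and h2: "a*Gtk*W0 - b*W0*Gtk = a*W0*Gk - b*Gk*W0"
  and h3: "X * Gt0 - Gt0 * X = W0 * Gtk - Gtk * W0"
  shows "X * (Gt0 + b*W1*W0 - a*W0*W1) = (Gt0 + b*W1*W0 - a*W0*W1) * X"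
proof -
  note R = cr[OF ca, of X] cr[OF ca, of W0] cr[OF ca, of W1] cr[OF ca, of Gt0] cr[OF ca, of Gk] cr[OF ca, of Gtk] cr[OF cb, of X] cr[OF cb, of W0] cr[OF cb, of W1] cr[OF cb, of Gt0] cr[OF cb, of Gk] cr[OF cb, of Gtk] cr[OF cc, of X] cr[OF cc, of W0] cr[OF cc, of W1] cr[OF cc, of Gt0] cr[OF cc, of Gk] cr[OF cc, of Gtk] sw[OF cc, of a] sw[OF cc, of b] sw[OF cb, of a]
  have "X * (Gt0 + b*W1*W0 - a*W0*W1) - (Gt0 + b*W1*W0 - a*W0*W1) * X
     = (X * Gt0 - Gt0 * X) + b * (X * W1 - W1 * X) * W0 - a * W0 * (X * W1 - W1 * X)
       + b * W1 * (X * W0 - W0 * X) - a * (X * W0 - W0 * X) * W1"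
    by (simp add: algebra_simps R)
  also have "\<dots> = (W0 * Gtk - Gtk * W0) + b * (c * (Gtk - Gk)) * W0 - a * W0 * (c * (Gtk - Gk))"
    by (simp add: h0 h1 h3)
  also have "\<dots> = c * ((a*W0*Gk - b*Gk*W0) - (a*Gtk*W0 - b*W0*Gtk)) + (1 - a*c - b*c) * (W0 * Gtk - Gtk * W0)"
    by (simp add: algebra_simps R)
  also have "\<dots> = 0" by (simp add: h2 abc[symmetric])
  finally show ?thesis by simp
qed

lemma LW1:
  fixes a b c X W0 W1 Gt0 Gk Gtk :: "'a::ring_1"
  assumes ca: "\<And>x. a * x = x * a" and cb: "\<And>x. b * x = x * b" and cc: "\<And>x. c * x = x * c"
  and abc: "a * c + b * c = 1"
  and h0: "X * W1 - W1 * X = 0"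
  and h1: "W0 * X - X * W0 = c * (Gtk - Gk)"
  and h2: "a*W1*Gtk - b*Gtk*W1 = a*Gk*W1 - b*W1*Gk"
  and h3: "X * Gt0 - Gt0 * X = W1 * Gtk - Gtk * W1"
  shows "X * (Gt0 + b*W1*W0 - a*W0*W1) = (Gt0 + b*W1*W0 - a*W0*W1) * X"
proof -
  note R = cr[OF ca, of X] cr[OF ca, of W0] cr[OF ca, of W1] cr[OF ca, of Gt0] cr[OF ca, of Gk] cr[OF ca, of Gtk] cr[OF cb, of X] cr[OF cb, of W0] cr[OF cb, of W1] cr[OF cb, of Gt0] cr[OF cb, of Gk] cr[OF cb, of Gtk] cr[OF cc, of X] cr[OF cc, of W0] cr[OF cc, of W1] cr[OF cc, of Gt0] cr[OF cc, of Gk] cr[OF cc, of Gtk] sw[OF cc, of a] sw[OF cc, of b] sw[OF cb, of a]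
  have "X * (Gt0 + b*W1*W0 - a*W0*W1) - (Gt0 + b*W1*W0 - a*W0*W1) * X
     = (X * Gt0 - Gt0 * X) - b * W1 * (W0 * X - X * W0) + a * (W0 * X - X * W0) * W1
       + b * (X * W1 - W1 * X) * W0 - a * W0 * (X * W1 - W1 * X)"
    by (simp add: algebra_simps R)
  also have "\<dots> = (W1 * Gtk - Gtk * W1) - b * W1 * (c * (Gtk - Gk)) + a * (c * (Gtk - Gk)) * W1"
    by (simp add: h0 h1 h3)
  also have "\<dots> = c * ((a*W1*Gtk - b*Gtk*W1) - (a*Gk*W1 - b*W1*Gk)) + (1 - a*c - b*c) * (W1 * Gtk - Gtk * W1)"
    by (simp add: algebra_simps R)
  also have "\<dots> = 0" by (simp add: h2 abc[symmetric])
  finally show ?thesis by simp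
qed

lemma LG:
  fixes a b r X W0 W1 G0 E F :: "'a::ring_1"
  assumes ca: "\<And>x. a * x = x * a" and cb: "\<And>x. b * x = x * b" and cr0: "\<And>x. r * x = x * r"
  and hE: "a*W0*X - b*X*W0 = r*E"
  and hF: "a*X*W1 - b*W1*X = r*F"
  and hEF: "E*W1 - W1*E + F*W0 - W0*F = 0"
  and hGG: "G0*X = X*G0"
  shows "(G0 + b*W0*W1 - a*W1*W0) * X = X * (G0 + b*W0*W1 - a*W1*W0)"
proof -
  obtain P where P: "P = a*W0*X - b*X*W0 - r*E" by simp
  obtain Q where Q: "Q = a*X*W1 - b*W1*X - r*F" by simp
  note R = cr[OF ca, of X] cr[OF ca, of W0] cr[OF ca, of W1] cr[OF ca, of G0] cr[OF ca, of E] cr[OF ca, of F] cr[OF ca, of P] cr[OF ca, of Q] cr[OF cb, of X] cr[OF cb, of W0] cr[OF cb, of W1] cr[OF cb, of G0] cr[OF cb, of E] cr[OF cb, of F] cr[OF cb, of P] cr[OF cb, of Q] cr[OF cr0, of X] cr[OF cr0, of W0] cr[OF cr0, of W1] cr[OF cr0, of G0] cr[OF cr0, of E] cr[OF cr0, of F] cr[OF cr0, of P] cr[OF cr0, of Q] sw[OF cr0, of a] sw[OF cr0, of b] sw[OF cb, of a]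
  have "(G0 + b*W0*W1 - a*W1*W0) * X - X * (G0 + b*W0*W1 - a*W1*W0)
     = (G0*X - X*G0) + r * (E*W1 - W1*E + F*W0 - W0*F) + P*W1 - W1*P + Q*W0 - W0*Q"
    unfolding P Q by (simp add: algebra_simps R)
  also have "\<dots> = 0" using hE hF hEF hGG by (simp add: P Q)
  finally show ?thesis by simp
qed

lemma comm_closed:
  fixes z :: "'a::ring_1"
  shows "z*x = x*z \<Longrightarrow> z*y = y*z \<Longrightarrow> z*(x+y) = (x+y)*z"
    and "z*x = x*z \<Longrightarrow> z*y = y*z \<Longrightarrow> z*(x-y) = (x-y)*z"
    and "z*x = x*z \<Longrightarrow> z*y = y*z \<Longrightarrow> z*(x*y) = (x*y)*z"
  by (simp_all add: algebra_simps) (metis mult.assoc)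

lemma qi: fixes q :: "'f::field" assumes "q \<noteq> 0" "\<forall>n::nat. n > 0 \<longrightarrow> q ^ n \<noteq> 1"
  shows "q + inverse q \<noteq> 0"
proof
  assume h: "q + inverse q = 0"
  have "q * (q + inverse q) = q^2 + 1" using assms(1) by (simp add: distrib_left power2_eq_square)
  then have "q^2 + 1 = 0" using h by simp
  then have "q^2 = -1" by (simp add: eq_neg_iff_add_eq_0)
  then have "q^4 = 1" using power_mult[of q 2 2] by simp
  then show False using assms(2) by (metis zero_less_numeral)
qed
lemma abc: fixes phi :: "'f::field \<Rightarrow> 'a::ring_1"
  assumes padd: "\<And>x y. phi (x + y) = phi x + phi y" and pmul: "\<And>x y. phi (x * y) = phi x * phi y"
    and p1: "phi 1 = 1" and qi: "q + inverse q \<noteq> 0"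
  shows "phi q * phi (inverse (q + inverse q)) + phi (inverse q) * phi (inverse (q + inverse q)) = 1"
proof -
  have "phi q * phi (inverse (q + inverse q)) + phi (inverse q) * phi (inverse (q + inverse q))
      = phi ((q + inverse q) * inverse (q + inverse q))" by (simp only: pmul padd distrib_right)
  also have "\<dots> = 1" using qi p1 by simp
  finally show ?thesis .
qed
lemma zb: fixes phi :: "'f::field \<Rightarrow> 'a::ring_1"
  assumes pmul: "\<And>x y. phi (x * y) = phi x * phi y" and "q \<noteq> 0"
  shows "phi q * phi (inverse q ^ 2) = phi (inverse q)"
proof -
  have "q * inverse q ^ 2 = inverse q" using assms(2) by (simp add: power2_eq_square)
  then show ?thesis by (metis pmul)
qed

theorem lemma11p3:
  fixes phi :: "'f::field \<Rightarrow> 'a::ring_1" and q :: 'f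
    and Wm Wp G Gt :: "nat \<Rightarrow> 'a"
  assumes "central_field_hom phi"
    and "q \<noteq> 0" and "\<forall>n::nat. n > 0 \<longrightarrow> q ^ n \<noteq> 1"
    and "Oq_relations phi q Wm Wp G Gt"
  shows "\<forall>x \<in> gen_subalg phi Wm Wp G Gt.
           (let B = phi (inverse q ^ 2) * Wp 0 * Wm 0 - Wm 0 * Wp 0;
                z = Gt 0 + phi q * B
            in z * x = x * z)"
proof -
  have padd: "\<And>x y. phi (x + y) = phi x + phi y" and pmul: "\<And>x y. phi (x * y) = phi x * phi y"
    and p1: "phi 1 = 1" and pc: "\<And>c x. phi c * x = x * phi c"
    using assms(1) unfolding central_field_hom_def by blast+
  note R = assms(4)[unfolded Oq_relations_def comm_def qcomm_def]
  note r1 = R[THEN conjunct1]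
  note r2 = R[THEN conjunct2, THEN conjunct1]
  note r3 = R[THEN conjunct2, THEN conjunct2, THEN conjunct1]
  note r4 = R[THEN conjunct2, THEN conjunct2, THEN conjunct2, THEN conjunct1]
  note r5 = R[THEN conjunct2, THEN conjunct2, THEN conjunct2, THEN conjunct2, THEN conjunct1]
  note r6 = R[THEN conjunct2, THEN conjunct2, THEN conjunct2, THEN conjunct2, THEN conjunct2, THEN conjunct1]
  note r7 = R[THEN conjunct2, THEN conjunct2, THEN conjunct2, THEN conjunct2, THEN conjunct2, THEN conjunct2, THEN conjunct1]
  note r8 = R[THEN conjunct2, THEN conjunct2, THEN conjunct2, THEN conjunct2, THEN conjunct2, THEN conjunct2, THEN conjunct2, THEN conjunct1]
  note r9 = R[THEN conjunct2, THEN conjunct2, THEN conjunct2, THEN conjunct2, THEN conjunct2, THEN conjunct2, THEN conjunct2, THEN conjunct2, THEN conjunct1]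
  note r10 = R[THEN conjunct2, THEN conjunct2, THEN conjunct2, THEN conjunct2, THEN conjunct2, THEN conjunct2, THEN conjunct2, THEN conjunct2, THEN conjunct2, THEN conjunct1]
  note r11 = R[THEN conjunct2, THEN conjunct2, THEN conjunct2, THEN conjunct2, THEN conjunct2, THEN conjunct2, THEN conjunct2, THEN conjunct2, THEN conjunct2, THEN conjunct2]
  define a where "a = phi q"
  define b where "b = phi (inverse q)"
  define c where "c = phi (inverse (q + inverse q))"
  define r where "r = phi (rho q)"
  have ca: "\<And>x. a * x = x * a" and cb: "\<And>x. b * x = x * b" and cc: "\<And>x. c * x = x * c"
    and cr0: "\<And>x. r * x = x * r"
    unfolding a_def b_def c_def r_def by (rule pc)+
  have qi: "q + inverse q \<noteq> 0" by (rule qi[OF assms(2,3)])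
  have abc: "a * c + b * c = 1"
    unfolding a_def b_def c_def by (rule abc[OF padd pmul p1 qi])
  have ab_c: "(a + b) * c = 1" using abc by (simp add: distrib_right)
  have zeq: "Gt 0 + phi q * (phi (inverse q ^ 2) * Wp 0 * Wm 0 - Wm 0 * Wp 0)
      = Gt 0 + b * Wp 0 * Wm 0 - a * Wm 0 * Wp 0"
  proof -
    have "phi q * phi (inverse q ^ 2) = b" unfolding b_def by (rule zb[OF pmul assms(2)])
    moreover have "phi q * (phi (inverse q ^ 2) * Wp 0 * Wm 0 - Wm 0 * Wp 0)
        = phi q * phi (inverse q ^ 2) * Wp 0 * Wm 0 - phi q * Wm 0 * Wp 0"
      by (simp only: right_diff_distrib mult.assoc)
    ultimately show ?thesis unfolding a_def by (simp only: add_diff_eq)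
  qed
  define zz where "zz = Gt 0 + b * Wp 0 * Wm 0 - a * Wm 0 * Wp 0"
  have cWm: "zz * Wm k = Wm k * zz" for k
    unfolding zz_def
  proof (rule LW0[OF ca cb cc abc, symmetric])
    show "Wm k * Wm 0 - Wm 0 * Wm k = 0" using r4 by blast
    show "Wm k * Wp 0 - Wp 0 * Wm k = c * (Gt k - G k)" using r1 unfolding c_def by blast
    show "a * Gt k * Wm 0 - b * Wm 0 * Gt k = a * Wm 0 * G k - b * G k * Wm 0"
      using r2[rule_format, of k] unfolding a_def b_def by (elim conjE) (erule trans, erule sym)
    have "Wm k * Gt 0 - Gt 0 * Wm k + (Gt k * Wm 0 - Wm 0 * Gt k) = 0" using r7 by blast
    then show "Wm k * Gt 0 - Gt 0 * Wm k = Wm 0 * Gt k - Gt k * Wm 0"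
      by (simp add: algebra_simps eq_neg_iff_add_eq_0[symmetric])
  qed
  have cWp: "zz * Wp k = Wp k * zz" for k
    unfolding zz_def
  proof (rule LW1[OF ca cb cc abc, symmetric])
    show "Wp k * Wp 0 - Wp 0 * Wp k = 0" using r4 by blast
    show "Wm 0 * Wp k - Wp k * Wm 0 = c * (Gt k - G k)" using r1 unfolding c_def by blast
    show "a * Wp 0 * Gt k - b * Gt k * Wp 0 = a * G k * Wp 0 - b * Wp 0 * G k"
      using r3[rule_format, of k] unfolding a_def b_def by (elim conjE) (erule trans, erule sym)
    have "Wp k * Gt 0 - Gt 0 * Wp k + (Gt k * Wp 0 - Wp 0 * Gt k) = 0" using r9 by blast
    then show "Wp k * Gt 0 - Gt 0 * Wp k = Wp 0 * Gt k - Gt k * Wp 0"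
      by (simp add: algebra_simps eq_neg_iff_add_eq_0[symmetric])
  qed
  have GtG: "Gt k - G k = (a + b) * (Wm 0 * Wp k - Wp k * Wm 0)" for k
  proof -
    have "Wm 0 * Wp k - Wp k * Wm 0 = c * (Gt k - G k)" using r1 unfolding c_def by blast
    then have "(a + b) * (Wm 0 * Wp k - Wp k * Wm 0) = ((a + b) * c) * (Gt k - G k)"
      by (simp add: mult.assoc)
    then show ?thesis using ab_c by simp
  qed
  have zz2: "zz = G 0 + b * Wm 0 * Wp 0 - a * Wp 0 * Wm 0"
  proof -
    have "zz - (G 0 + b * Wm 0 * Wp 0 - a * Wp 0 * Wm 0)
        = (Gt 0 - G 0) - (a + b) * (Wm 0 * Wp 0 - Wp 0 * Wm 0)"
      unfolding zz_def by (simp add: algebra_simps)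
    also have "\<dots> = 0" using GtG[of 0] by simp
    finally show ?thesis by simp
  qed
  have cG: "zz * G k = G k * zz" for k
    unfolding zz2
  proof (rule LG[OF ca cb cr0])
    have "a * Wm 0 * G k - b * G k * Wm 0 = r * Wm (Suc k) - r * Wp k"
      using r2 unfolding a_def b_def r_def by blast
    then show "a * Wm 0 * G k - b * G k * Wm 0 = r * (Wm (Suc k) - Wp k)"
      by (simp add: right_diff_distrib)
    have "a * G k * Wp 0 - b * Wp 0 * G k = r * Wp (Suc k) - r * Wm k"
      using r3 unfolding a_def b_def r_def by blast
    then show "a * G k * Wp 0 - b * Wp 0 * G k = r * (Wp (Suc k) - Wm k)"
      by (simp add: right_diff_distrib)
    have "G 0 * G k - G k * G 0 = 0" using r10 by blast
    then show "G 0 * G k = G k * G 0" by simp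
    have e1: "Wm (Suc k) * Wp 0 - Wp 0 * Wm (Suc k) = Wm 0 * Wp (Suc k) - Wp (Suc k) * Wm 0"
      using r1[rule_format, of "Suc k"] by (elim conjE) (erule trans, erule sym)
    have e2: "Wp k * Wp 0 - Wp 0 * Wp k = 0" "Wm k * Wm 0 - Wm 0 * Wm k = 0" using r4 by blast+
    show "(Wm (Suc k) - Wp k) * Wp 0 - Wp 0 * (Wm (Suc k) - Wp k) +
          (Wp (Suc k) - Wm k) * Wm 0 - Wm 0 * (Wp (Suc k) - Wm k) = 0"
    proof -
      have "(Wm (Suc k) - Wp k) * Wp 0 - Wp 0 * (Wm (Suc k) - Wp k) +
          (Wp (Suc k) - Wm k) * Wm 0 - Wm 0 * (Wp (Suc k) - Wm k)
        = (Wm (Suc k) * Wp 0 - Wp 0 * Wm (Suc k)) - (Wm 0 * Wp (Suc k) - Wp (Suc k) * Wm 0)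
          - (Wp k * Wp 0 - Wp 0 * Wp k) - (Wm k * Wm 0 - Wm 0 * Wm k)"
        by (simp add: algebra_simps)
      then show ?thesis using e1 e2 by simp
    qed
  qed
  have cGt: "zz * Gt k = Gt k * zz" for k
  proof -
    have "Gt k = G k + (a + b) * (Wm 0 * Wp k - Wp k * Wm 0)" using GtG[of k] by (simp add: algebra_simps)
    moreover have "zz * (a + b) = (a + b) * zz" using ca cb by (simp add: algebra_simps)
    moreover have "zz * (Wm 0 * Wp k - Wp k * Wm 0) = (Wm 0 * Wp k - Wp k * Wm 0) * zz"
      by (rule comm_closed(2)[OF comm_closed(3)[OF cWm cWp] comm_closed(3)[OF cWp cWm]])
    ultimately show ?thesis
      using comm_closed(1)[OF cG comm_closed(3)] by simp
  qed
  have main: "zz * x = x * zz" if "x \<in> gen_subalg phi Wm Wp G Gt" for x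
    using that
  proof (induction rule: gen_subalg.induct)
    case (scal c) then show ?case by (rule pc[symmetric])
  next
    case (add x y) then show ?case by (simp add: comm_closed(1))
  next
    case (mult x y) then show ?case by (simp add: comm_closed(3))
  qed (auto intro: cWm cWp cG cGt)
  show ?thesis using main unfolding Let_def zeq zz_def by blast
qed

end
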